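(* Fix integers $0\le d\le m$, $\delta\in(0,1)$, $\chi>0$. There is $\varepsilon_0>0$ such that for all $0<\varepsilon<\varepsilon_0$: let $r>0$ with $2r^\delta<\varepsilon$, let $0<\eta\le p\le r/2$, $0<\widetilde\eta\le\widetilde p$ with $\widetilde p\le e^\varepsilon p$ and $e^{-\varepsilon}\le\widetilde\eta/\eta\le e^{\varepsilon}$, let $\widetilde q$ satisfy $\widetilde\eta\le\widetilde q\le r/2$, and let $F=D+H:B^m[r]\to\mathbb R^m$ satisfy (GT2)–(GT3). Then for every $V^u\in\mathscr M^u_{p,\eta}$ and every $V^s\in\mathscr M^s_{\widetilde q,\widetilde\eta}$, the intersection $F(V^u)\cap V^s$ consists of exactly one point.
   Context: $\|\cdot\|$ Euclidean; $B^n[r]$ balls at $0$; ${\rm Hol}_\delta(h)=\sup_{x\ne y}\|h(x)-h(y)\|/\|x-y\|^\delta$; $\|h\|_{C^0}=\sup\|h\|$. $\mathbb R^m=\mathbb R^d\times\mathbb R^{m-d}$. $\mathscr M^u_{p,\eta}$: graphs $\{(v,G(v)):v\in B^d[p]\}$; $\mathscr M^s_{q,\eta}$: graphs $\{(J(w),w):w\in B^{m-d}[q]\}$; the $C^{1+\delta}$ representing functions satisfy (AM1) value at $0$ of norm $\le10^{-3}\eta$, (AM2) derivative at $0$ of norm $\le\frac12\eta^\delta$, (AM3) $\|d\cdot\|_{C^0}+{\rm Hol}_\delta(d\cdot)\le\frac12$. (GT2): $D={\rm diag}(D_1,D_2)$ with $D_1$ on $\mathbb R^d$, $D_2$ on $\mathbb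 R^{m-d}$ invertible linear, $\|D_1^{-1}\|<e^{-\chi}$, $\|D_2\|<e^{-\chi}$. (GT3): $H:B^m[r]\to\mathbb R^m$ is $C^{1+\delta}$ with $\|H(0)\|<\varepsilon\eta$, $\|dH\|_{C^0(B^m[t])}<\varepsilon t^\delta$ for all $t\in[\eta,2p]$, ${\rm Hol}_\delta(dH)<\varepsilon$. *)

theory Defs
  imports "HOL-Analysis.Analysis"
begin

text \<open>Hoelder constant of exponent delta of h on the set S (sup over distinct pairs; 0 included
  so that the supremum is of a nonempty set).\<close>
definition hol :: "real \<Rightarrow> ('a::real_normed_vector \<Rightarrow> 'b::real_normed_vector) \<Rightarrow> 'a set \<Rightarrow> real" where
  "hol \<delta> h S = Sup (insert 0 {norm (h x - h y) / (norm (x - y) powr \<delta>) | x y. x \<in> S \<and> y \<in> S \<and> x \<noteq> y})"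

definition c0norm :: "('a \<Rightarrow> 'b::real_normed_vector) \<Rightarrow> 'a set \<Rightarrow> real" where
  "c0norm h S = Sup (insert 0 ((\<lambda>x. norm (h x)) ` S))"

definition C1hol :: "real \<Rightarrow> 'a set \<Rightarrow> ('a::real_normed_vector \<Rightarrow> 'b::real_normed_vector)
    \<Rightarrow> ('a \<Rightarrow> 'a \<Rightarrow>\<^sub>L 'b) \<Rightarrow> bool" where
  "C1hol \<delta> S G dG \<longleftrightarrow>
     (\<forall>x\<in>S. (G has_derivative blinfun_apply (dG x)) (at x within S)) \<and>
     (\<exists>C. \<forall>x\<in>S. \<forall>y\<in>S. norm (dG x - dG y) \<le> C * norm (x - y) powr \<delta>)"

definition admissible :: "real \<Rightarrow> real \<Rightarrow> real \<Rightarrow> ('a::euclidean_space \<Rightarrow> 'b::euclidean_space) \<Rightarrow> bool" where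
  "admissible \<delta> p \<eta> G \<longleftrightarrow> (\<exists>dG. C1hol \<delta> (cball 0 p) G dG \<and>
     norm (G 0) \<le> 10 powr (-3) * \<eta> \<and>
     norm (dG 0) \<le> 1/2 * \<eta> powr \<delta> \<and>
     c0norm dG (cball 0 p) + hol \<delta> dG (cball 0 p) \<le> 1/2)"

text \<open>R^m = R^d x R^(m-d) is modelled as 'a \<times> 'b.\<close>
definition Mu :: "real \<Rightarrow> real \<Rightarrow> real \<Rightarrow> ('a::euclidean_space \<times> 'b::euclidean_space) set set" where
  "Mu \<delta> p \<eta> = {V. \<exists>G::'a \<Rightarrow> 'b. admissible \<delta> p \<eta> G \<and> V = {(v, G v) | v. v \<in> cball 0 p}}"

definition Ms :: "real \<Rightarrow> real \<Rightarrow> real \<Rightarrow> ('a::euclidean_space \<times> 'b::euclidean_space) set set" where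
  "Ms \<delta> q \<eta> = {V. \<exists>J::'b \<Rightarrow> 'a. admissible \<delta> q \<eta> J \<and> V = {(J w, w) | w. w \<in> cball 0 q}}"

definition GT2 :: "real \<Rightarrow> ('a::euclidean_space \<Rightarrow>\<^sub>L 'a) \<Rightarrow> ('b::euclidean_space \<Rightarrow>\<^sub>L 'b) \<Rightarrow> bool" where
  "GT2 chi D1 D2 \<longleftrightarrow>
     (\<exists>D1i. D1i o\<^sub>L D1 = id_blinfun \<and> D1 o\<^sub>L D1i = id_blinfun \<and> norm D1i < exp (-chi)) \<and>
     (\<exists>D2i. D2i o\<^sub>L D2 = id_blinfun \<and> D2 o\<^sub>L D2i = id_blinfun) \<and> norm D2 < exp (-chi)"

definition GT3 :: "real \<Rightarrow> real \<Rightarrow> real \<Rightarrow> real \<Rightarrow> real \<Rightarrow> ('c::euclidean_space \<Rightarrow> 'c) \<Rightarrow> bool" where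
  "GT3 \<delta> \<epsilon> r \<eta> p H \<longleftrightarrow> (\<exists>dH. C1hol \<delta> (cball 0 r) H dH \<and>
     norm (H 0) < \<epsilon> * \<eta> \<and>
     (\<forall>t. \<eta> \<le> t \<and> t \<le> 2 * p \<longrightarrow> c0norm dH (cball 0 t) < \<epsilon> * t powr \<delta>) \<and>
     hol \<delta> dH (cball 0 r) < \<epsilon>)"

definition diagF :: "('a::real_normed_vector \<Rightarrow>\<^sub>L 'a) \<Rightarrow> ('b::real_normed_vector \<Rightarrow>\<^sub>L 'b)
    \<Rightarrow> ('a \<times> 'b \<Rightarrow> 'a \<times> 'b) \<Rightarrow> 'a \<times> 'b \<Rightarrow> 'a \<times> 'b" where
  "diagF D1 D2 H x = (D1 (fst x), D2 (snd x)) + H x"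

end

theory Submission
  imports Defs
begin

lemma hoelder_bounds:
  fixes dG :: "'a::real_normed_vector \<Rightarrow> 'c::real_normed_vector"
  assumes H: "\<forall>x\<in>S. \<forall>y\<in>S. norm (dG x - dG y) \<le> C * norm (x - y) powr \<delta>"
    and S: "S \<subseteq> cball 0 R" "0 \<in> S" and d: "0 \<le> \<delta>"
  shows "0 \<le> hol \<delta> dG S" "\<And>x. x \<in> S \<Longrightarrow> norm (dG x) \<le> c0norm dG S"
proof -
  have "bdd_above (insert 0 {norm (dG x - dG y) / (norm (x - y) powr \<delta>) | x y. x \<in> S \<and> y \<in> S \<and> x \<noteq> y})"
  proof (rule bdd_aboveI[where M="max 0 C"])
    fix z assume "z \<in> insert 0 {norm (dG x - dG y) / (norm (x - y) powr \<delta>) | x y. x \<in> S \<and> y \<in> S \<and> x \<noteq> y}"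
    then show "z \<le> max 0 C"
    proof
      assume "z = 0" thus ?thesis by simp
    next
      assume "z \<in> {norm (dG x - dG y) / (norm (x - y) powr \<delta>) | x y. x \<in> S \<and> y \<in> S \<and> x \<noteq> y}"
      then obtain x y where xy: "x \<in> S" "y \<in> S" "x \<noteq> y" "z = norm (dG x - dG y) / (norm (x - y) powr \<delta>)" by blast
      have p: "norm (x - y) powr \<delta> > 0" using xy by simp
      have "z \<le> C" using H xy p by (simp add: divide_le_eq)
      thus ?thesis by simp
    qed
  qed
  then show "0 \<le> hol \<delta> dG S" unfolding hol_def by (rule cSup_upper[rotated]) simp
  have "bdd_above (insert 0 ((\<lambda>x. norm (dG x)) ` S))"
  proof (rule bdd_aboveI[where M="norm (dG 0) + \<bar>C\<bar> * R powr \<delta>"])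
    fix z assume "z \<in> insert 0 ((\<lambda>x. norm (dG x)) ` S)"
    then show "z \<le> norm (dG 0) + \<bar>C\<bar> * R powr \<delta>"
    proof
      assume "z = 0" thus ?thesis by simp
    next
      assume "z \<in> (\<lambda>x. norm (dG x)) ` S"
      then obtain x where x: "x \<in> S" "z = norm (dG x)" by blast
      have "norm x \<le> R" using x S by auto
      hence a: "norm x powr \<delta> \<le> R powr \<delta>" using d by (simp add: powr_mono2)
      have "norm (dG x - dG 0) \<le> C * norm x powr \<delta>" using H x S(2) by (metis diff_zero)
      also have "\<dots> \<le> \<bar>C\<bar> * norm x powr \<delta>" by (simp add: mult_right_mono)
      also have "\<dots> \<le> \<bar>C\<bar> * R powr \<delta>" using a by (simp add: mult_left_mono)
      finally have "norm (dG x - dG 0) \<le> \<bar>C\<bar> * R powr \<delta>" .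
      moreover have "norm (dG x) \<le> norm (dG 0) + norm (dG x - dG 0)"
        by (metis add.commute diff_add_cancel norm_triangle_ineq)
      ultimately show ?thesis using x by simp
    qed
  qed
  then show "\<And>x. x \<in> S \<Longrightarrow> norm (dG x) \<le> c0norm dG S" unfolding c0norm_def
    by (intro cSup_upper) auto
qed

lemma admissible_lip:
  fixes G :: "'a::euclidean_space \<Rightarrow> 'b::euclidean_space"
  assumes "admissible \<delta> p \<eta> G" "0 \<le> \<delta>" "0 \<le> p"
  shows "norm (G 0) \<le> \<eta> / 1000"
    "\<And>x y. x \<in> cball 0 p \<Longrightarrow> y \<in> cball 0 p \<Longrightarrow> norm (G x - G y) \<le> 1/2 * norm (x - y)"
proof -
  obtain dG where dG: "C1hol \<delta> (cball 0 p) G dG" "norm (G 0) \<le> 10 powr (-3) * \<eta>"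
    "c0norm dG (cball 0 p) + hol \<delta> dG (cball 0 p) \<le> 1/2"
    using assms(1) unfolding admissible_def by blast
  have "10 powr (-3::real) = 1/1000" by (simp add: powr_minus powr_realpow)
  thus "norm (G 0) \<le> \<eta> / 1000" using dG(2) by (metis mult.commute times_divide_eq_right mult_1_right)
  obtain C where C: "\<forall>x\<in>cball 0 p. \<forall>y\<in>cball 0 p. norm (dG x - dG y) \<le> C * norm (x - y) powr \<delta>"
    using dG(1) unfolding C1hol_def by blast
  note hb = hoelder_bounds[OF C order.refl _ assms(2)]
  have der: "\<And>x. x \<in> cball 0 p \<Longrightarrow> (G has_derivative blinfun_apply (dG x)) (at x within cball 0 p)"
    using dG(1) unfolding C1hol_def by blast
  fix x y :: 'a assume xy: "x \<in> cball 0 p" "y \<in> cball 0 p"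
  show "norm (G x - G y) \<le> 1/2 * norm (x - y)"
  proof (rule differentiable_bound[OF convex_cball der _ xy])
    fix z :: 'a assume z: "z \<in> cball 0 p"
    have "norm (dG z) \<le> 1/2" using hb(1) hb(2)[OF _ z] dG(3) assms(3) by simp
    thus "onorm (blinfun_apply (dG z)) \<le> 1/2" by (simp add: norm_blinfun.rep_eq)
  qed
qed

lemma GT3_lip:
  fixes H :: "'c::euclidean_space \<Rightarrow> 'c"
  assumes "GT3 \<delta> \<epsilon> r \<eta> p H" "0 < \<delta>" "0 < \<eta>" "\<eta> \<le> p" "p \<le> r / 2" "r powr \<delta> \<le> 1"
  shows "norm (H 0) < \<epsilon> * \<eta>"
    "\<And>x y. x \<in> cball 0 (2*p) \<Longrightarrow> y \<in> cball 0 (2*p) \<Longrightarrow> norm (H x - H y) \<le> \<epsilon> * norm (x - y)"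
proof -
  obtain dH where dH: "C1hol \<delta> (cball 0 r) H dH" "norm (H 0) < \<epsilon> * \<eta>"
     "\<forall>t. \<eta> \<le> t \<and> t \<le> 2 * p \<longrightarrow> c0norm dH (cball 0 t) < \<epsilon> * t powr \<delta>"
    using assms(1) unfolding GT3_def by blast
  show "norm (H 0) < \<epsilon> * \<eta>" by (rule dH(2))
  obtain C where C: "\<forall>x\<in>cball 0 r. \<forall>y\<in>cball 0 r. norm (dH x - dH y) \<le> C * norm (x - y) powr \<delta>"
    using dH(1) unfolding C1hol_def by blast
  have sub: "cball 0 (2*p) \<subseteq> cball (0::'c) r" using assms by auto
  have C': "\<forall>x\<in>cball 0 (2*p). \<forall>y\<in>cball 0 (2*p). norm (dH x - dH y) \<le> C * norm (x - y) powr \<delta>"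
    using C sub by blast
  have p0: "0 \<le> p" using assms by simp
  note hb = hoelder_bounds[OF C' order.refl _ less_imp_le[OF assms(2)]]
  have c0: "c0norm dH (cball 0 (2*p)) < \<epsilon> * (2*p) powr \<delta>" using dH(3) assms by auto
  have "(2*p) powr \<delta> \<le> r powr \<delta>" using assms by (intro powr_mono2) auto
  hence pw: "(2*p) powr \<delta> \<le> 1" using assms(6) by simp
  have der: "\<And>x. x \<in> cball 0 (2*p) \<Longrightarrow> (H has_derivative blinfun_apply (dH x)) (at x within cball 0 (2*p))"
    using dH(1) sub unfolding C1hol_def by (meson has_derivative_subset subsetD)
  fix x y :: 'c assume xy: "x \<in> cball 0 (2*p)" "y \<in> cball 0 (2*p)"
  show "norm (H x - H y) \<le> \<epsilon> * norm (x - y)"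
  proof (rule differentiable_bound[OF convex_cball der _ xy])
    fix z :: 'c assume z: "z \<in> cball 0 (2*p)"
    have nz: "norm (dH z) \<le> c0norm dH (cball 0 (2*p))" using hb(2)[OF _ z] p0 by simp
    hence "0 \<le> c0norm dH (cball 0 (2*p))" using norm_ge_zero[of "dH z"] by linarith
    hence "\<epsilon> \<ge> 0" using c0 by (smt (verit) mult_nonpos_nonneg powr_ge_zero)
    hence "\<epsilon> * (2*p) powr \<delta> \<le> \<epsilon>" using pw by (simp add: mult_left_le)
    hence "norm (dH z) \<le> \<epsilon>" using hb(2)[OF _ z] c0 p0 z by simp
    thus "onorm (blinfun_apply (dH z)) \<le> \<epsilon>" by (simp add: norm_blinfun.rep_eq)
  qed
qed

theorem lemmaA4:
  fixes \<delta> chi :: real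
  assumes "0 < \<delta>" "\<delta> < 1" "0 < chi"
  shows "\<exists>\<epsilon>0>0. \<forall>\<epsilon>. 0 < \<epsilon> \<and> \<epsilon> < \<epsilon>0 \<longrightarrow>
    (\<forall>r \<eta> p \<eta>' p' q' (D1::'a::euclidean_space \<Rightarrow>\<^sub>L 'a) (D2::'b::euclidean_space \<Rightarrow>\<^sub>L 'b) H.
       0 < r \<and> 2 * r powr \<delta> < \<epsilon> \<and>
       0 < \<eta> \<and> \<eta> \<le> p \<and> p \<le> r / 2 \<and>
       0 < \<eta>' \<and> \<eta>' \<le> p' \<and> p' \<le> exp \<epsilon> * p \<and>
       exp (-\<epsilon>) \<le> \<eta>' / \<eta> \<and> \<eta>' / \<eta> \<le> exp \<epsilon> \<and>
       \<eta>' \<le> q' \<and> q' \<le> r / 2 \<and>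
       GT2 chi D1 D2 \<and> GT3 \<delta> \<epsilon> r \<eta> p H
     \<longrightarrow> (\<forall>Vu \<in> Mu \<delta> p \<eta>. \<forall>Vs \<in> Ms \<delta> q' \<eta>'.
            \<exists>z. diagF D1 D2 H ` Vu \<inter> Vs = {z}))"
proof (intro exI[where x="1/10::real"] conjI allI impI ballI)
  show "(0::real) < 1/10" by simp
  fix \<epsilon> r \<eta> p \<eta>' p' q' :: real and D1 :: "'a \<Rightarrow>\<^sub>L 'a" and D2 :: "'b \<Rightarrow>\<^sub>L 'b" and H :: "'a \<times> 'b \<Rightarrow> 'a \<times> 'b"
    and Vu Vs
  assume e: "0 < \<epsilon> \<and> \<epsilon> < 1/10"
  assume A: "0 < r \<and> 2 * r powr \<delta> < \<epsilon> \<and>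
       0 < \<eta> \<and> \<eta> \<le> p \<and> p \<le> r / 2 \<and>
       0 < \<eta>' \<and> \<eta>' \<le> p' \<and> p' \<le> exp \<epsilon> * p \<and>
       exp (-\<epsilon>) \<le> \<eta>' / \<eta> \<and> \<eta>' / \<eta> \<le> exp \<epsilon> \<and>
       \<eta>' \<le> q' \<and> q' \<le> r / 2 \<and>
       GT2 chi D1 D2 \<and> GT3 \<delta> \<epsilon> r \<eta> p H"
  assume Vu: "Vu \<in> (Mu \<delta> p \<eta> :: ('a \<times> 'b) set set)" and Vs: "Vs \<in> (Ms \<delta> q' \<eta>' :: ('a \<times> 'b) set set)"
  obtain G :: "'a \<Rightarrow> 'b" where G: "admissible \<delta> p \<eta> G" "Vu = {(v, G v) | v. v \<in> cball 0 p}"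
    using Vu unfolding Mu_def by blast
  obtain J :: "'b \<Rightarrow> 'a" where J: "admissible \<delta> q' \<eta>' J" "Vs = {(J w, w) | w. w \<in> cball 0 q'}"
    using Vs unfolding Ms_def by blast
  have e0: "0 < \<epsilon>" "\<epsilon> < 1/10" using e by auto
  have r1: "r powr \<delta> \<le> 1" using A e by linarith
  have eta: "0 < \<eta>" "\<eta> \<le> p" "p \<le> r/2" "0 < \<eta>'" "\<eta>' \<le> q'" using A by auto
  note HH = GT3_lip[OF conjunct2[OF conjunct2[OF conjunct2[OF conjunct2[OF conjunct2[OF conjunct2[OF conjunct2[OF conjunct2[OF conjunct2[OF conjunct2[OF conjunct2[OF conjunct2[OF conjunct2[OF A]]]]]]]]]]]]] assms(1) eta(1-3) r1]
  have p0: "0 \<le> p" "0 \<le> q'" using eta by auto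
  note GG = admissible_lip[OF G(1) less_imp_le[OF assms(1)] p0(1)]
  note JJ = admissible_lip[OF J(1) less_imp_le[OF assms(1)] p0(2)]
  have GT2: "GT2 chi D1 D2" using A by blast
  obtain D1i where D1i: "D1i o\<^sub>L D1 = id_blinfun" "D1 o\<^sub>L D1i = id_blinfun" "norm D1i < exp (-chi)"
    and D2n: "norm D2 < exp (-chi)" using GT2 unfolding GT2_def by blast
  have ec: "exp (-chi) < 1" using assms(3) by simp
  have D1iD1: "\<And>x. D1i (D1 x) = x" using D1i(1) by (metis blinfun_apply_blinfun_compose blinfun_apply_id_blinfun)
  have D1D1i: "\<And>x. D1 (D1i x) = x" using D1i(2) by (metis blinfun_apply_blinfun_compose blinfun_apply_id_blinfun)
  have D1in: "\<And>x. norm (D1i x) \<le> norm x"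
    by (metis D1i(3) ec less_imp_le mult_right_mono norm_blinfun norm_ge_zero order.strict_trans mult_1 order.trans)
  have D2n': "\<And>x. norm (D2 x) \<le> norm x"
    by (metis D2n ec less_imp_le mult_right_mono norm_blinfun norm_ge_zero order.strict_trans mult_1 order.trans)
  have "exp (-\<epsilon>) * \<eta> \<le> \<eta>'" using A eta(1) by (simp add: pos_le_divide_eq)
  moreover have "(1 - \<epsilon>) * \<eta> \<le> exp (-\<epsilon>) * \<eta>" using eta(1) exp_ge_add_one_self[of "-\<epsilon>"]
    by (intro mult_right_mono) auto
  moreover have "(1 - \<epsilon>) * \<eta> \<ge> 9/10 * \<eta>" using eta(1) e0 by (intro mult_right_mono) auto
  ultimately have eta'1: "9/10 * \<eta> \<le> \<eta>'" by linarith
  have ee1: "\<eta>' \<le> exp \<epsilon> * \<eta>" using A eta(1) by (simp add: pos_divide_le_eq)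
  have "exp \<epsilon> \<le> exp 1" using e0 by simp
  hence "exp \<epsilon> \<le> 3" using exp_le by linarith
  hence "exp \<epsilon> * \<eta> \<le> 3 * \<eta>" using eta(1) by (intro mult_right_mono) auto
  hence eta'2: "\<eta>' \<le> 3 * \<eta>" using ee1 by linarith
  define g where "g v = (v, G v)" for v
  define \<Phi> where "\<Phi> v = D2 (G v) + snd (H (g v))" for v
  define T where "T v = D1i (J (\<Phi> v) - fst (H (g v)))" for v
  have Gb: "norm (G v) \<le> \<eta>/1000 + norm v / 2" if "v \<in> cball 0 p" for v
  proof -
    have "norm (G v - G 0) \<le> 1/2 * norm (v - 0)" using GG(2)[OF that, of 0] p0 by simp
    moreover have "norm (G v) \<le> norm (G 0) + norm (G v - G 0)" by (metis add.commute diff_add_cancel norm_triangle_ineq)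
    ultimately show ?thesis using GG(1) by simp
  qed
  have gn: "norm (g v) \<le> norm v + norm (G v)" for v unfolding g_def by (rule norm_Pair_le)
  have gin: "g v \<in> cball 0 (2*p)" if "v \<in> cball 0 p" for v
    using Gb[OF that] gn[of v] that eta by simp
  have gL: "norm (g v1 - g v2) \<le> 3/2 * norm (v1 - v2)" if "v1 \<in> cball 0 p" "v2 \<in> cball 0 p" for v1 v2
  proof -
    have "norm (g v1 - g v2) \<le> norm (v1 - v2) + norm (G v1 - G v2)"
      unfolding g_def using norm_Pair_le[of "v1 - v2" "G v1 - G v2"] by simp
    thus ?thesis using GG(2)[OF that] by simp
  qed
  have sndn: "norm (snd z) \<le> norm z" for z :: "'a \<times> 'b" by (metis norm_snd_le prod.collapse)
  have fstn: "norm (fst z) \<le> norm z" for z :: "'a \<times> 'b" by (metis norm_fst_le prod.collapse)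
  have HgL: "norm (H (g v1) - H (g v2)) \<le> \<epsilon> * (3/2 * norm (v1 - v2))" if "v1 \<in> cball 0 p" "v2 \<in> cball 0 p" for v1 v2
  proof -
    have "norm (H (g v1) - H (g v2)) \<le> \<epsilon> * norm (g v1 - g v2)" using HH(2)[OF gin[OF that(1)] gin[OF that(2)]] .
    also have "\<dots> \<le> \<epsilon> * (3/2 * norm (v1 - v2))" using gL[OF that] e0 by (intro mult_left_mono) auto
    finally show ?thesis .
  qed
  have PhiL: "norm (\<Phi> v1 - \<Phi> v2) \<le> 1/2 * norm (v1 - v2) + \<epsilon> * (3/2 * norm (v1 - v2))"
    if "v1 \<in> cball 0 p" "v2 \<in> cball 0 p" for v1 v2
  proof -
    have "\<Phi> v1 - \<Phi> v2 = D2 (G v1 - G v2) + snd (H (g v1) - H (g v2))"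
      unfolding \<Phi>_def by (simp add: blinfun.diff_right)
    hence "norm (\<Phi> v1 - \<Phi> v2) \<le> norm (D2 (G v1 - G v2)) + norm (snd (H (g v1) - H (g v2)))"
      by (metis norm_triangle_ineq)
    also have "\<dots> \<le> norm (G v1 - G v2) + norm (H (g v1) - H (g v2))" using D2n' sndn by (meson add_mono)
    finally show ?thesis using GG(2)[OF that] HgL[OF that] by linarith
  qed
  have TL: "norm (T v1 - T v2) \<le> 1/2 * norm (v1 - v2)"
    if "v1 \<in> cball 0 p" "v2 \<in> cball 0 p" "\<Phi> v1 \<in> cball 0 q'" "\<Phi> v2 \<in> cball 0 q'" for v1 v2
  proof -
    have "T v1 - T v2 = D1i ((J (\<Phi> v1) - J (\<Phi> v2)) - fst (H (g v1) - H (g v2)))"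
      unfolding T_def by (simp add: blinfun.diff_right blinfun.add_right algebra_simps)
    hence "norm (T v1 - T v2) \<le> norm ((J (\<Phi> v1) - J (\<Phi> v2)) - fst (H (g v1) - H (g v2)))"
      using D1in by metis
    also have "\<dots> \<le> norm (J (\<Phi> v1) - J (\<Phi> v2)) + norm (fst (H (g v1) - H (g v2)))" by (rule norm_triangle_ineq4)
    also have "\<dots> \<le> 1/2 * norm (\<Phi> v1 - \<Phi> v2) + norm (H (g v1) - H (g v2))"
      using JJ(2)[OF that(3,4)] fstn by (meson add_mono)
    finally have t: "norm (T v1 - T v2) \<le> 1/2 * norm (\<Phi> v1 - \<Phi> v2) + norm (H (g v1) - H (g v2))" .
    have ed: "\<epsilon> * norm (v1 - v2) \<le> 1/10 * norm (v1 - v2)" using e0 by (intro mult_right_mono) auto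
    have eq: "\<epsilon> * (3/2 * norm (v1 - v2)) = 3/2 * (\<epsilon> * norm (v1 - v2))" by simp
    show ?thesis using t PhiL[OF that(1,2)] HgL[OF that(1,2)] ed norm_ge_zero[of "v1 - v2"] unfolding eq by linarith
  qed
  have SM: "\<Phi> v \<in> cball 0 q' \<and> T v \<in> cball 0 \<eta>" if v: "v \<in> cball 0 \<eta>" for v
  proof -
    have vp: "v \<in> cball 0 p" using v eta by auto
    have nv: "norm v \<le> \<eta>" using v by simp
    have G1: "norm (G v) \<le> \<eta>/1000 + \<eta>/2" using Gb[OF vp] nv by simp
    have g1: "norm (g v) \<le> 1501/1000 * \<eta>" using gn[of v] G1 nv by simp
    have "norm (H (g v) - H 0) \<le> \<epsilon> * norm (g v - 0)" using HH(2)[OF gin[OF vp], of 0] p0 by simp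
    moreover have "norm (H (g v)) \<le> norm (H 0) + norm (H (g v) - H 0)" by (metis add.commute diff_add_cancel norm_triangle_ineq)
    moreover have "\<epsilon> * norm (g v) \<le> \<epsilon> * (1501/1000 * \<eta>)" using g1 e0 by (intro mult_left_mono) auto
    moreover have "\<epsilon> * \<eta> \<le> 1/10 * \<eta>" using e0 eta by (intro mult_right_mono) auto
    ultimately have H1: "norm (H (g v)) \<le> 2501/10000 * \<eta>" using HH(1) by (simp add: algebra_simps)
    have "norm (\<Phi> v) \<le> norm (D2 (G v)) + norm (snd (H (g v)))" unfolding \<Phi>_def by (rule norm_triangle_ineq)
    also have "\<dots> \<le> norm (G v) + norm (H (g v))" using D2n' sndn by (meson add_mono)
    finally have P1: "norm (\<Phi> v) \<le> 7511/10000 * \<eta>" using G1 H1 by simp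
    hence Pin: "\<Phi> v \<in> cball 0 q'" using eta'1 eta by simp
    have "norm (J (\<Phi> v) - J 0) \<le> 1/2 * norm (\<Phi> v - 0)" using JJ(2)[OF Pin, of 0] p0 by simp
    moreover have "norm (J (\<Phi> v)) \<le> norm (J 0) + norm (J (\<Phi> v) - J 0)" by (metis add.commute diff_add_cancel norm_triangle_ineq)
    ultimately have J1: "norm (J (\<Phi> v)) \<le> 3/1000 * \<eta> + 7511/20000 * \<eta>" using JJ(1) P1 eta'2 by simp
    have "norm (T v) \<le> norm (J (\<Phi> v) - fst (H (g v)))" unfolding T_def by (rule D1in)
    also have "\<dots> \<le> norm (J (\<Phi> v)) + norm (fst (H (g v)))" by (rule norm_triangle_ineq4)
    also have "\<dots> \<le> norm (J (\<Phi> v)) + norm (H (g v))" using fstn by simp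
    finally have "norm (T v) \<le> \<eta>" using J1 H1 eta by simp
    thus ?thesis using Pin by simp
  qed
  have cmp: "complete (cball (0::'a) \<eta>)" by (simp add: complete_eq_closed)
  have "\<exists>!x\<in>cball 0 \<eta>. T x = x"
  proof (rule Banach_fix[OF cmp _ _ _ _ ])
    show "cball (0::'a) \<eta> \<noteq> {}" using eta by simp
    show "(0::real) \<le> 1/2" "(1/2::real) < 1" by auto
    show "T ` cball 0 \<eta> \<subseteq> cball 0 \<eta>" using SM by blast
    fix x y assume xy: "x \<in> cball (0::'a) \<eta>" "y \<in> cball (0::'a) \<eta>"
    hence "x \<in> cball 0 p" "y \<in> cball 0 p" using eta by auto
    thus "dist (T x) (T y) \<le> 1/2 * dist x y" using TL SM xy by (simp add: dist_norm)
  qed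
  then obtain v0 where v0: "v0 \<in> cball 0 \<eta>" "T v0 = v0" by blast
  have v0p: "v0 \<in> cball 0 p" using v0 eta by auto
  have Pv0: "\<Phi> v0 \<in> cball 0 q'" using SM v0 by blast
  have Fg: "diagF D1 D2 H (g v) = (D1 v + fst (H (g v)), \<Phi> v)" for v
    unfolding diagF_def \<Phi>_def g_def by (simp add: plus_prod_def)
  have key: "D1 v0 + fst (H (g v0)) = J (\<Phi> v0)"
  proof -
    have "D1 v0 = D1 (T v0)" using v0 by simp
    also have "\<dots> = J (\<Phi> v0) - fst (H (g v0))" unfolding T_def by (rule D1D1i)
    finally show ?thesis by simp
  qed
  show "\<exists>z. diagF D1 D2 H ` Vu \<inter> Vs = {z}"
  proof (intro exI[where x="diagF D1 D2 H (g v0)"] equalityI subsetI)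
    fix z assume "z \<in> {diagF D1 D2 H (g v0)}"
    hence z: "z = diagF D1 D2 H (g v0)" by simp
    have "g v0 \<in> Vu" unfolding G(2) g_def using v0p by blast
    moreover have "z \<in> Vs" unfolding J(2) z Fg key using Pv0 by blast
    ultimately show "z \<in> diagF D1 D2 H ` Vu \<inter> Vs" using z by blast
  next
    fix z assume "z \<in> diagF D1 D2 H ` Vu \<inter> Vs"
    then obtain v w where v: "v \<in> cball 0 p" and w: "w \<in> cball 0 q'"
      and zv: "z = diagF D1 D2 H (g v)" and zw: "z = (J w, w)"
      unfolding G(2) J(2) g_def by blast
    have w1: "w = \<Phi> v" and j: "J w = D1 v + fst (H (g v))" using zv zw Fg[of v] by auto
    have Tv: "T v = v" unfolding T_def using j w1 D1iD1 by simp
    have "norm (v - v0) \<le> 1/2 * norm (v - v0)"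
      using TL[OF v v0p _ Pv0] w w1 Tv v0 by simp
    hence "v = v0" by simp
    thus "z \<in> {diagF D1 D2 H (g v0)}" using zv by simp
  qed
qed

end
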